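(* Assume the following statement holds: for every base $b>2$, every integer $n$ with $1<n<b$, and every symmetric $(n,b)$-palintiple with carries $c_k,\ldots,c_0$, one has $c_j\equiv 0 \pmod{n-1}$ for all $0\le j\le k$. Then, for integers $b>2$ and $1<n<b$, any two $(n,b)$-palintiples belong to the same class: either both are symmetric, or both are shifted-symmetric, or both are asymmetric.
   Context: Let $b>2$ be an integer base and write $(d_k,d_{k-1},\ldots,d_0)_b=\sum_{j=0}^k d_j b^j$ with $0\le d_j<b$. A natural number $p=(d_k,\ldots,d_0)_b$ with $d_k\neq 0$ and $d_0\neq 0$ that is not a base-$b$ palindrome is an $(n,b)$-palintiple if $(d_k,\ldots,d_0)_b=n\,(d_0,d_1,\ldots,d_k)_b$ for an integer $n$ with $1<n<b$. Its carries $c_0,\ldots,c_{k+1}$ are the carries arising in the base-$b$ multiplication of $(d_0,\ldots,d_k)_b$ by $n$: $c_0=0$ and $n d_{k-j}+c_j=d_j+b\,c_{j+1}$ for $0\le j\le k$ (so $c_{k+1}=0$). The palintiple is symmetric if $c_j=c_{k-j}$ for all $0\le j\le k$, shifted-symmetric if $c_j=c_{k-j+1}$ for all $0\le j\le k$, and asymmetric if it is neither symmetric nor shifted-symmetric. *)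

theory Defs
  imports Main "HOL-Number_Theory.Cong"
begin

definition digit :: "nat \<Rightarrow> nat \<Rightarrow> nat \<Rightarrow> nat" where
  "digit b p j = (p div b ^ j) mod b"

definition topidx :: "nat \<Rightarrow> nat \<Rightarrow> nat" where
  "topidx b p = (LEAST k. p < b ^ Suc k)"

definition revnum :: "nat \<Rightarrow> nat \<Rightarrow> nat" where
  "revnum b p = (\<Sum>j\<le>topidx b p. digit b p (topidx b p - j) * b ^ j)"

definition palindrome :: "nat \<Rightarrow> nat \<Rightarrow> bool" where
  "palindrome b p \<longleftrightarrow> (\<forall>j\<le>topidx b p. digit b p j = digit b p (topidx b p - j))"

definition palintiple :: "nat \<Rightarrow> nat \<Rightarrow> nat \<Rightarrow> bool" where
  "palintiple n b p \<longleftrightarrow> 1 < n \<and> n < b \<and> 0 < p \<and>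
     digit b p (topidx b p) \<noteq> 0 \<and> digit b p 0 \<noteq> 0 \<and>
     \<not> palindrome b p \<and> p = n * revnum b p"

text \<open>Carries of the base-b multiplication of (d_0,...,d_k)_b by n:
  c_0 = 0, c_(j+1) = (n d_(k-j) + c_j) div b.\<close>
fun carry :: "nat \<Rightarrow> nat \<Rightarrow> nat \<Rightarrow> nat \<Rightarrow> nat" where
  "carry n b p 0 = 0"
| "carry n b p (Suc j) = (n * digit b p (topidx b p - j) + carry n b p j) div b"

definition symmetric_pal :: "nat \<Rightarrow> nat \<Rightarrow> nat \<Rightarrow> bool" where
  "symmetric_pal n b p \<longleftrightarrow>
     (\<forall>j\<le>topidx b p. carry n b p j = carry n b p (topidx b p - j))"

definition shifted_symmetric_pal :: "nat \<Rightarrow> nat \<Rightarrow> nat \<Rightarrow> bool" where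
  "shifted_symmetric_pal n b p \<longleftrightarrow>
     (\<forall>j\<le>topidx b p. carry n b p j = carry n b p (topidx b p - j + 1))"

definition asymmetric_pal :: "nat \<Rightarrow> nat \<Rightarrow> nat \<Rightarrow> bool" where
  "asymmetric_pal n b p \<longleftrightarrow> \<not> symmetric_pal n b p \<and> \<not> shifted_symmetric_pal n b p"

end

theory Submission
  imports Defs
begin

lemma carry_lt:
  assumes "1 < b" "0 < n"
  shows "carry n b p j < n"
proof (induction j)
  case 0 then show ?case using assms by simp
next
  case (Suc j)
  have d: "digit b p (topidx b p - j) < b"
    using assms unfolding digit_def by simp
  have "n * digit b p (topidx b p - j) + carry n b p j < n * digit b p (topidx b p - j) + n"
    using Suc by simp
  also have "... = n * (digit b p (topidx b p - j) + 1)" by simp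
  also have "... \<le> n * b" using d by (intro mult_le_mono2) simp
  finally have "n * digit b p (topidx b p - j) + carry n b p j < n * b" .
  then show ?case by (simp add: less_mult_imp_div_less)
qed

lemma topidx_bound:
  assumes "1 < b"
  shows "p < b ^ Suc (topidx b p)"
proof -
  have "p < b ^ Suc p"
  proof -
    have "p < 2 ^ p" by (rule less_exp)
    also have "... \<le> b ^ p" using assms by (simp add: power_mono)
    also have "... \<le> b ^ Suc p" using assms by simp
    finally show ?thesis .
  qed
  then show ?thesis unfolding topidx_def by (rule LeastI)
qed

definition RR :: "nat \<Rightarrow> nat \<Rightarrow> nat \<Rightarrow> nat" where
  "RR b p j = (\<Sum>i<j. digit b p (topidx b p - i) * b ^ i)"

lemma revnum_RR: "revnum b p = RR b p (Suc (topidx b p))"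
  unfolding revnum_def RR_def by (simp add: lessThan_Suc_atMost)

lemma RR_mod: "RR b p (j + m) mod b ^ j = RR b p j mod b ^ j"
proof (induction m)
  case 0 then show ?case by simp
next
  case (Suc m)
  have "RR b p (j + Suc m) = RR b p (j + m) + digit b p (topidx b p - (j+m)) * b ^ (j+m)"
    unfolding RR_def by simp
  also have "... = RR b p (j + m) + b ^ j * (digit b p (topidx b p - (j+m)) * b ^ m)"
    by (simp add: power_add)
  finally have "RR b p (j + Suc m) mod b ^ j = (RR b p (j + m) + b ^ j * (digit b p (topidx b p - (j+m)) * b ^ m)) mod b ^ j"
    by simp
  also have "... = RR b p (j + m) mod b ^ j" by simp
  finally show ?case using Suc by simp
qed

lemma revnum_mod:
  assumes "j \<le> Suc (topidx b p)"
  shows "(n * revnum b p) mod b ^ j = (n * RR b p j) mod b ^ j"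
proof -
  obtain m where "Suc (topidx b p) = j + m" using assms le_Suc_ex by blast
  then have "revnum b p mod b ^ j = RR b p j mod b ^ j" using RR_mod revnum_RR by metis
  then show ?thesis by (metis mod_mult_right_eq)
qed

lemma stepE:
  assumes pn: "p = n * revnum b p" and b: "1 < b" and j: "j \<le> topidx b p"
    and Q: "n * RR b p j = p mod b ^ j + carry n b p j * b ^ j"
  shows "(carry n b p j + n * digit b p (topidx b p - j)) mod b = digit b p j"
proof -
  let ?T = "carry n b p j + n * digit b p (topidx b p - j)"
  have e1: "n * RR b p (Suc j) = p mod b ^ j + ?T * b ^ j"
    using Q unfolding RR_def by (simp add: algebra_simps)
  have "p mod b ^ Suc j = (n * RR b p (Suc j)) mod b ^ Suc j"
    using revnum_mod[of "Suc j" b p n] j pn by simp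
  also have "... = (p mod b ^ j + ?T * b ^ j) mod (b ^ j * b)" using e1 by (simp add: mult.commute)
  also have "... = b ^ j * ((p mod b ^ j + ?T * b ^ j) div b ^ j mod b) + (p mod b ^ j + ?T * b ^ j) mod b ^ j"
    by (rule mod_mult2_eq)
  also have "... = b ^ j * (?T mod b) + p mod b ^ j"
    using b by simp
  finally have A: "p mod b ^ Suc j = b ^ j * (?T mod b) + p mod b ^ j" .
  have "p mod b ^ Suc j = p mod (b ^ j * b)" by (simp add: mult.commute)
  also have "... = b ^ j * (p div b ^ j mod b) + p mod b ^ j" by (rule mod_mult2_eq)
  finally have B: "p mod b ^ Suc j = b ^ j * digit b p j + p mod b ^ j" unfolding digit_def .
  from A B have "b ^ j * (?T mod b) = b ^ j * digit b p j" by simp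
  then show ?thesis using b by simp
qed

lemma mainQ:
  assumes pn: "p = n * revnum b p" and b: "1 < b"
  shows "j \<le> Suc (topidx b p) \<Longrightarrow> n * RR b p j = p mod b ^ j + carry n b p j * b ^ j"
proof (induction j)
  case 0 then show ?case by (simp add: RR_def)
next
  case (Suc j)
  then have jk: "j \<le> topidx b p" by simp
  let ?T = "carry n b p j + n * digit b p (topidx b p - j)"
  have IH: "n * RR b p j = p mod b ^ j + carry n b p j * b ^ j" using Suc by simp
  have e1: "n * RR b p (Suc j) = p mod b ^ j + ?T * b ^ j"
    using IH unfolding RR_def by (simp add: algebra_simps)
  have m: "?T mod b = digit b p j" using stepE[OF pn b jk IH] .
  have cS: "carry n b p (Suc j) = ?T div b" by (simp add: add.commute)
  have T: "?T = digit b p j + b * carry n b p (Suc j)"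
    using m cS mod_mult_div_eq[of ?T b] by simp
  have "p mod (b ^ j * b) = b ^ j * (p div b ^ j mod b) + p mod b ^ j" by (rule mod_mult2_eq)
  then have B: "p mod b ^ Suc j = b ^ j * digit b p j + p mod b ^ j" unfolding digit_def by (simp add: mult.commute)
  have TT: "?T * b ^ j = digit b p j * b ^ j + carry n b p (Suc j) * b ^ Suc j"
  proof -
    have gen: "\<And>d c::nat. (d + b * c) * b ^ j = d * b ^ j + c * b ^ Suc j"
      by (simp add: algebra_simps)
    show ?thesis by (simp only: T gen)
  qed
  show ?case using e1 TT B by simp
qed

lemma eqE:
  assumes pn: "p = n * revnum b p" and b: "1 < b" and j: "j \<le> topidx b p"
  shows "n * digit b p (topidx b p - j) + carry n b p j = digit b p j + b * carry n b p (Suc j)"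
proof -
  have m: "(carry n b p j + n * digit b p (topidx b p - j)) mod b = digit b p j"
    using stepE[OF pn b j mainQ[OF pn b]] j by simp
  then show ?thesis by simp (metis mod_mult_div_eq add.commute)
qed

lemma carry_last:
  assumes pn: "p = n * revnum b p" and b: "1 < b"
  shows "carry n b p (Suc (topidx b p)) = 0"
proof -
  let ?K = "Suc (topidx b p)"
  have "n * RR b p ?K = p mod b ^ ?K + carry n b p ?K * b ^ ?K" using mainQ[OF pn b] by simp
  moreover have "n * RR b p ?K = p" using pn revnum_RR by metis
  moreover have "p mod b ^ ?K = p" using topidx_bound[OF b] by simp
  ultimately show ?thesis using b by simp
qed


lemma core:
  fixes n b c x y :: int
  assumes N: "(n^2 - 1) dvd (b - n) * c" "(n^2 - 1) dvd b * x - n * y"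
    and c: "1 \<le> c" "c \<le> n - 1" and x: "0 \<le> x" "x \<le> n - 1" and y: "0 \<le> y" "y \<le> n - 1"
  shows "x = y"
proof -
  have e: "(b * x - n * y) * c - ((b - n) * c) * x = n * (c * (x - y))" by (simp add: algebra_simps)
  have "(n^2 - 1) dvd n * (c * (x - y))" using N e by (metis dvd_diff dvd_mult2)
  then have "(n^2 - 1) dvd n * (n * (c * (x - y)))" by simp
  moreover have "n * (n * (c * (x - y))) = (n^2 - 1) * (c * (x - y)) + c * (x - y)"
    by (simp add: algebra_simps power2_eq_square)
  ultimately have "(n^2 - 1) dvd c * (x - y)" by (metis dvd_add_right_iff dvd_triv_left)
  then obtain m where m: "c * (x - y) = (n^2 - 1) * m" by blast
  have "\<bar>x - y\<bar> \<le> n - 1" using x y by linarith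
  then have "c * \<bar>x - y\<bar> \<le> (n - 1) * (n - 1)" using c
    by (intro mult_mono) auto
  then have "\<bar>c * (x - y)\<bar> \<le> (n - 1) * (n - 1)" using c by (simp add: abs_mult)
  moreover have "(n - 1) * (n - 1) < n^2 - 1" using c by (simp add: algebra_simps power2_eq_square)
  ultimately have lt: "\<bar>(n^2 - 1) * m\<bar> < n^2 - 1" using m by linarith
  have "m = 0"
  proof (rule ccontr)
    assume "m \<noteq> 0"
    then have "1 \<le> \<bar>m\<bar>" by linarith
    moreover have np: "0 < n^2 - 1"
    proof -
      have "n^2 - 1 = (n - 1) * (n + 1)" by (simp add: algebra_simps power2_eq_square)
      moreover have "0 < (n - 1) * (n + 1)" using c by (intro mult_pos_pos) auto
      ultimately show ?thesis by simp
    qed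
    ultimately have "(n^2 - 1) * 1 \<le> (n^2 - 1) * \<bar>m\<bar>" by (intro mult_left_mono) auto
    moreover have "\<bar>(n^2 - 1) * m\<bar> = (n^2 - 1) * \<bar>m\<bar>" using np by (simp add: abs_mult abs_of_pos)
    ultimately have "n^2 - 1 \<le> \<bar>(n^2 - 1) * m\<bar>" by simp
    then show False using lt by simp
  qed
  then have "c * (x - y) = 0" using m by simp
  then show ?thesis using c by simp
qed


lemma Npos_lemma: assumes "1 < n" shows "int n ^ 2 - 1 > 0"
proof -
  have "int n ^ 2 - 1 = (int n - 1) * (int n + 1)" by (simp add: algebra_simps power2_eq_square)
  moreover have "0 < (int n - 1) * (int n + 1)" using assms by (intro mult_pos_pos) auto
  ultimately show ?thesis by simp
qed

lemma dvd_small: fixes x m :: int assumes "m dvd x" "\<bar>x\<bar> < m" shows "x = 0"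
  using dvd_imp_le_int[of x m] assms by auto

lemma pal_k: assumes "palintiple n b p" shows "1 \<le> topidx b p"
proof (rule ccontr)
  assume "\<not> 1 \<le> topidx b p"
  then have "topidx b p = 0" by simp
  then have "palindrome b p" unfolding palindrome_def by simp
  then show False using assms unfolding palintiple_def by simp
qed

lemma pal_E:
  assumes "palintiple n b p" "j \<le> topidx b p"
  shows "n * digit b p (topidx b p - j) + carry n b p j = digit b p j + b * carry n b p (Suc j)"
  using assms eqE unfolding palintiple_def by (metis less_trans)

lemma pal_last: assumes "palintiple n b p" shows "carry n b p (Suc (topidx b p)) = 0"
  using assms carry_last unfolding palintiple_def by (metis less_trans)

lemma pal_clt: assumes "palintiple n b p" shows "carry n b p j < n"
  using assms carry_lt unfolding palintiple_def by (metis less_trans zero_less_one)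

lemma pal_Ei:
  assumes P: "palintiple n b p" and j: "j \<le> topidx b p"
  shows "int n * int (digit b p (topidx b p - j)) + int (carry n b p j) = int (digit b p j) + int b * int (carry n b p (Suc j))"
proof -
  have "int (n * digit b p (topidx b p - j) + carry n b p j) = int (digit b p j + b * carry n b p (Suc j))"
    using pal_E[OF P j] by (rule arg_cong)
  then show ?thesis by (simp only: of_nat_add of_nat_mult)
qed

lemma pal_Ei2:
  assumes P: "palintiple n b p" and j: "j \<le> topidx b p"
  shows "int n * int (digit b p j) + int (carry n b p (topidx b p - j)) = int (digit b p (topidx b p - j)) + int b * int (carry n b p (Suc (topidx b p - j)))"
proof -
  have kk: "topidx b p - (topidx b p - j) = j" using j by simp
  have "int n * int (digit b p (topidx b p - (topidx b p - j))) + int (carry n b p (topidx b p - j)) = int (digit b p (topidx b p - j)) + int b * int (carry n b p (Suc (topidx b p - j)))"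
    using pal_Ei[OF P diff_le_self] .
  then show ?thesis unfolding kk .
qed

lemma pal_pair:
  assumes P: "palintiple n b p" and j: "j \<le> topidx b p"
  shows "(int n ^ 2 - 1) * int (digit b p j) =
     int b * int (carry n b p (Suc j)) + int n * int b * int (carry n b p (Suc (topidx b p - j)))
     - int n * int (carry n b p (topidx b p - j)) - int (carry n b p j)"
proof -
  let ?k = "topidx b p"
  have e1: "int n * int (digit b p (?k - j)) + int (carry n b p j) = int (digit b p j) + int b * int (carry n b p (Suc j))"
    using pal_Ei[OF P j] .
  have e2: "int n * int (digit b p j) + int (carry n b p (?k - j)) = int (digit b p (?k - j)) + int b * int (carry n b p (Suc (?k - j)))"
    using pal_Ei2[OF P j] .
  have "int n * (int n * int (digit b p j) + int (carry n b p (?k - j))) = int n * (int (digit b p (?k - j)) + int b * int (carry n b p (Suc (?k - j))))"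
    using e2 by simp
  then show ?thesis using e1 by (simp add: algebra_simps power2_eq_square)
qed

lemma sym_of_dvd:
  assumes P: "palintiple n b p" and d: "(n + 1) dvd b"
  shows "symmetric_pal n b p"
  unfolding symmetric_pal_def
proof (intro allI impI)
  fix j assume j: "j \<le> topidx b p"
  let ?k = "topidx b p"
  obtain t where t: "b = (n + 1) * t" using d by blast
  have e1: "int n * int (digit b p (?k - j)) + int (carry n b p j) = int (digit b p j) + int b * int (carry n b p (Suc j))"
    using pal_Ei[OF P j] .
  have e2: "int n * int (digit b p j) + int (carry n b p (?k - j)) = int (digit b p (?k - j)) + int b * int (carry n b p (Suc (?k - j)))"
    using pal_Ei2[OF P j] .
  have "int (carry n b p j) - int (carry n b p (?k - j)) =
     (int n + 1) * (int (digit b p j) - int (digit b p (?k - j)) + int t * (int (carry n b p (Suc j)) - int (carry n b p (Suc (?k - j)))))"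
    using e1 e2 t by (simp add: algebra_simps)
  then have dv: "(int n + 1) dvd (int (carry n b p j) - int (carry n b p (?k - j)))" by simp
  have "carry n b p j < n" "carry n b p (?k - j) < n" using pal_clt[OF P] by auto
  then have "\<bar>int (carry n b p j) - int (carry n b p (?k - j))\<bar> < int n + 1" by linarith
  then have "int (carry n b p j) - int (carry n b p (?k - j)) = 0"
    using dv by (intro dvd_small) auto
  then show "carry n b p j = carry n b p (?k - j)" by simp
qed

lemma dvd_of_sym:
  assumes P: "palintiple n b p" and S: "symmetric_pal n b p"
    and H: "\<forall>j\<le>topidx b p. [carry n b p j = 0] (mod (n - 1))"
  shows "(n + 1) dvd b"
proof -
  let ?k = "topidx b p"
  have k1: "1 \<le> ?k" using pal_k[OF P] .
  have n1: "1 < n" using P unfolding palintiple_def by simp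
  have "carry n b p ?k = carry n b p (?k - ?k)" using S unfolding symmetric_pal_def by blast
  then have ck: "carry n b p ?k = 0" by simp
  define c where "c = carry n b p 1"
  have pr: "(int n ^ 2 - 1) * int (digit b p 0) = int b * int c"
    using pal_pair[OF P, of 0] pal_last[OF P] ck unfolding c_def by simp
  have d0: "digit b p 0 > 0" using P unfolding palintiple_def by simp
  have c1lt: "c < n" using pal_clt[OF P] unfolding c_def .
  have "(int n ^ 2 - 1) > 0" using Npos_lemma[OF n1] by simp
  then have "(int n ^ 2 - 1) * int (digit b p 0) > 0" using d0 by simp
  then have "c \<noteq> 0" using pr by (intro notI) simp
  moreover have "[carry n b p 1 = 0] (mod (n - 1))" using H k1 by blast
  then have "c mod (n - 1) = 0" unfolding cong_def c_def[symmetric] by simp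
  ultimately have c1: "c = n - 1"
  proof -
    assume a1: "c \<noteq> 0" and a2: "c mod (n - 1) = 0"
    show "c = n - 1"
    proof (rule ccontr)
      assume "c \<noteq> n - 1"
      then have "c < n - 1" using c1lt by simp
      then have "c mod (n - 1) = c" by simp
      then show False using a1 a2 by simp
    qed
  qed
  have "(int n - 1) * ((int n + 1) * int (digit b p 0)) = (int n - 1) * int b"
    using pr c1 n1 by (simp add: algebra_simps power2_eq_square of_nat_diff)
  then have "(int n + 1) * int (digit b p 0) = int b" using n1 by simp
  then have "int ((n + 1) * digit b p 0) = int b" by (simp only: of_nat_mult of_nat_add of_nat_1)
  then have "(n + 1) * digit b p 0 = b" by (simp only: of_nat_eq_iff)
  then show ?thesis by (metis dvd_triv_left)
qed

lemma shifted_transfer: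
  assumes P: "palintiple n b p" and Hp: "shifted_symmetric_pal n b p" and Q: "palintiple n b q"
  shows "shifted_symmetric_pal n b q"
proof -
  let ?k = "topidx b p"
  let ?N = "int n ^ 2 - 1"
  have k1: "1 \<le> ?k" using pal_k[OF P] .
  have n1: "1 < n" using P unfolding palintiple_def by simp
  define c where "c = carry n b p 1"
  have "carry n b p 1 = carry n b p (?k - 1 + 1)" using Hp k1 unfolding shifted_symmetric_pal_def by blast
  moreover have "?k - 1 + 1 = ?k" using k1 by simp
  ultimately have ck: "carry n b p ?k = c" unfolding c_def by (simp del: carry.simps)
  have pr: "?N * int (digit b p 0) = (int b - int n) * int c"
    using pal_pair[OF P, of 0] pal_last[OF P] ck unfolding c_def by (simp add: algebra_simps)
  have d0: "digit b p 0 > 0" using P unfolding palintiple_def by simp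
  have Npos: "?N > 0" using Npos_lemma[OF n1] by simp
  then have "(int n ^ 2 - 1) * int (digit b p 0) > 0" using d0 by simp
  then have "c \<noteq> 0" using pr by (intro notI) simp
  then have c1: "1 \<le> int c" by simp
  have clt: "int c \<le> int n - 1" using pal_clt[OF P, of 1] unfolding c_def by simp
  have Nc: "?N dvd (int b - int n) * int c" unfolding pr[symmetric] by simp
  let ?kq = "topidx b q"
  have main: "j \<le> Suc ?kq \<Longrightarrow> carry n b q j = carry n b q (Suc ?kq - j) \<and> ?N dvd (int b - int n) * int (carry n b q j)" for j
  proof (induction j)
    case 0 then show ?case using pal_last[OF Q] by simp
  next
    case (Suc j)
    then have jk: "j \<le> ?kq" by simp
    define a where "a = carry n b q j"
    have IH0: "carry n b q j = carry n b q (Suc ?kq - j) \<and> ?N dvd (int b - int n) * int (carry n b q j)"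
      by (meson Suc.IH Suc.prems Suc_leD)
    have e: "Suc (?kq - j) = Suc ?kq - j" using jk by simp
    have IH1: "carry n b q (Suc (?kq - j)) = a" using IH0 e unfolding a_def by (simp del: carry.simps)
    have IH2: "?N dvd (int b - int n) * int a" using IH0 unfolding a_def by blast
    have pq: "?N * int (digit b q j) = int b * int (carry n b q (Suc j)) + int n * int b * int a
      - int n * int (carry n b q (?kq - j)) - int a"
      using pal_pair[OF Q jk] by (simp del: carry.simps add: IH1 a_def)
    have "(int n * int b - 1) * int a = int n * ((int b - int n) * int a) + ?N * int a"
      by (simp add: algebra_simps power2_eq_square)
    then have "?N dvd (int n * int b - 1) * int a" using IH2 by simp
    moreover have "int b * int (carry n b q (Suc j)) - int n * int (carry n b q (?kq - j))
       = ?N * int (digit b q j) - (int n * int b - 1) * int a" using pq by (simp add: algebra_simps)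
    ultimately have dv: "?N dvd int b * int (carry n b q (Suc j)) - int n * int (carry n b q (?kq - j))"
    proof -
      assume A1: "?N dvd (int n * int b - 1) * int a"
        and A2: "int b * int (carry n b q (Suc j)) - int n * int (carry n b q (?kq - j)) = ?N * int (digit b q j) - (int n * int b - 1) * int a"
      have "?N dvd ?N * int (digit b q j) - (int n * int b - 1) * int a"
        using A1 by (intro dvd_diff) simp_all
      then show ?thesis unfolding A2 .
    qed
    have xy: "int (carry n b q (Suc j)) = int (carry n b q (?kq - j))"
      apply (rule core[OF Nc dv c1 clt])
      using pal_clt[OF Q, of "Suc j"] pal_clt[OF Q, of "?kq - j"] by auto
    have "?N dvd (int b - int n) * int (carry n b q (Suc j))"
      using dv xy by (simp add: algebra_simps)
    moreover have "carry n b q (Suc j) = carry n b q (Suc ?kq - Suc j)" using xy by simp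
    ultimately show ?case by simp
  qed
  show ?thesis unfolding shifted_symmetric_pal_def
  proof (intro allI impI)
    fix j assume "j \<le> ?kq"
    then have "?kq - j + 1 = Suc ?kq - j" by simp
    moreover have "carry n b q j = carry n b q (Suc ?kq - j)" using main[of j] \<open>j \<le> ?kq\<close> by simp
    ultimately show "carry n b q j = carry n b q (?kq - j + 1)" by (simp only:)
  qed
qed

theorem corollary3:
  assumes hyp: "\<forall>b n p. 2 < b \<and> 1 < n \<and> n < b \<and> palintiple n b p \<and> symmetric_pal n b p
      \<longrightarrow> (\<forall>j\<le>topidx b p. [carry n b p j = 0] (mod (n - 1)))"
    and b: "2 < (b::nat)" and n1: "1 < (n::nat)" and nb: "n < b"
    and p: "palintiple n b p" and q: "palintiple n b q"
  shows "(symmetric_pal n b p \<and> symmetric_pal n b q)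
       \<or> (shifted_symmetric_pal n b p \<and> shifted_symmetric_pal n b q)
       \<or> (asymmetric_pal n b p \<and> asymmetric_pal n b q)"
proof (cases "(n + 1) dvd b")
  case True
  then show ?thesis using sym_of_dvd p q by blast
next
  case False
  have np: "\<not> symmetric_pal n b p" using False dvd_of_sym[OF p] hyp b n1 nb p by blast
  have nq: "\<not> symmetric_pal n b q" using False dvd_of_sym[OF q] hyp b n1 nb q by blast
  show ?thesis
  proof (cases "shifted_symmetric_pal n b p \<or> shifted_symmetric_pal n b q")
    case True
    then show ?thesis using shifted_transfer p q by blast
  next
    case False
    then show ?thesis using np nq unfolding asymmetric_pal_def by blast
  qed
qed
end
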